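(* Let $d\ge2$ be finite and consider a $d$-dimensional quantum system with finitely many measurement settings and finitely many outcomes. A measurement $x$ is specified by effects $\{\mathcal{E}_{a|x}\}_a$ (positive semidefinite, $\sum_a\mathcal{E}_{a|x}=\mathbb{1}$) together with, for each outcome $a$, a post-measurement state $\sigma_{a|x}$; the same measurements are used at both time steps, so that $p(ab|xy)=\mathrm{tr}(\mathcal{E}_{a|x}\varrho_{in})\,\mathrm{tr}(\mathcal{E}_{b|y}\sigma_{a|x})$. For arbitrary real coefficients $\alpha_{abxy}$ let $\mathcal{R}=\sum_{a,b,x,y}\alpha_{abxy}\,p(ab|xy)$, and let $R(\mathcal{P})$ be the supremum of $\mathcal{R}$ over all initial states $\varrho_{in}$ with purity $\mathrm{tr}(\varrho_{in}^2)=\mathcal{P}$ and all choices of effects and post-measurement states. Then $R(\mathcal{P})$ is a monotonically non-decreasing function of $\mathcal{P}\in[1/d,1]$.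
   Context: The purity of a state $\varrho$ is $\mathrm{tr}(\varrho^2)$, which ranges from $1/d$ (maximally mixed state) to $1$ (pure states). *)

theory Defs
  imports "HOL-Analysis.Analysis"
begin

text \<open>Operators on C^d, with d = CARD('n), as complex 'n x 'n matrices.\<close>

definition psd :: "complex^'n^'n \<Rightarrow> bool" where
  "psd A \<longleftrightarrow> (\<forall>i j. A $ i $ j = cnj (A $ j $ i)) \<and>
     (\<forall>v::complex^'n. let q = (\<Sum>i\<in>UNIV. cnj (v $ i) * (A *v v) $ i) in Im q = 0 \<and> Re q \<ge> 0)"

definition density :: "complex^'n^'n \<Rightarrow> bool" where
  "density \<rho> \<longleftrightarrow> psd \<rho> \<and> trace \<rho> = 1"

definition purity :: "complex^'n^'n \<Rightarrow> real" where
  "purity \<rho> = Re (trace (\<rho> ** \<rho>))"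

definition valid_instrument ::
  "('a::finite \<Rightarrow> 'x \<Rightarrow> complex^'n^'n) \<Rightarrow> ('a \<Rightarrow> 'x \<Rightarrow> complex^'n^'n) \<Rightarrow> bool" where
  "valid_instrument E \<sigma> \<longleftrightarrow>
     (\<forall>a x. psd (E a x)) \<and> (\<forall>x. (\<Sum>a\<in>UNIV. E a x) = mat 1) \<and> (\<forall>a x. density (\<sigma> a x))"

definition prob ::
  "complex^'n^'n \<Rightarrow> ('a \<Rightarrow> 'x \<Rightarrow> complex^'n^'n) \<Rightarrow> ('a \<Rightarrow> 'x \<Rightarrow> complex^'n^'n)
    \<Rightarrow> 'a \<Rightarrow> 'a \<Rightarrow> 'x \<Rightarrow> 'x \<Rightarrow> real" where
  "prob \<rho> E \<sigma> a b x y = Re (trace (E a x ** \<rho>)) * Re (trace (E b y ** \<sigma> a x))"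

definition Rval ::
  "('a::finite \<Rightarrow> 'a \<Rightarrow> 'x::finite \<Rightarrow> 'x \<Rightarrow> real) \<Rightarrow> complex^'n^'n
     \<Rightarrow> ('a \<Rightarrow> 'x \<Rightarrow> complex^'n^'n) \<Rightarrow> ('a \<Rightarrow> 'x \<Rightarrow> complex^'n^'n) \<Rightarrow> real" where
  "Rval \<alpha> \<rho> E \<sigma> = (\<Sum>a\<in>UNIV. \<Sum>b\<in>UNIV. \<Sum>x\<in>UNIV. \<Sum>y\<in>UNIV. \<alpha> a b x y * prob \<rho> E \<sigma> a b x y)"

definition Rmax ::
  "('a::finite \<Rightarrow> 'a \<Rightarrow> 'x::finite \<Rightarrow> 'x \<Rightarrow> real) \<Rightarrow> 'n::finite itself \<Rightarrow> real \<Rightarrow> real" where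
  "Rmax \<alpha> _ P = Sup {Rval \<alpha> \<rho> E \<sigma> | (\<rho>::complex^'n^'n) E \<sigma>.
       density \<rho> \<and> purity \<rho> = P \<and> valid_instrument E \<sigma>}"

end

theory Submission
  imports Defs
begin

definition qf :: "complex^'n^'n \<Rightarrow> complex^'n \<Rightarrow> complex" where
  "qf A v = (\<Sum>i\<in>UNIV. \<Sum>j\<in>UNIV. cnj (v$i) * A$i$j * v$j)"

definition outer :: "complex^'n \<Rightarrow> complex^'n^'n" where
  "outer w = (\<chi> i j. w$i * cnj (w$j))"

lemma psd_iff: "psd A \<longleftrightarrow> (\<forall>i j. A $ i $ j = cnj (A $ j $ i)) \<and> (\<forall>v. Im (qf A v) = 0 \<and> Re (qf A v) \<ge> 0)"
proof -
  have "(\<Sum>i\<in>UNIV. cnj (v $ i) * (A *v v) $ i) = qf A v" for v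
    by (simp add: qf_def matrix_vector_mult_def sum_distrib_left mult.assoc)
  then show ?thesis unfolding psd_def Let_def by simp
qed

lemma psd_qf: "psd A \<Longrightarrow> Im (qf A v) = 0 \<and> Re (qf A v) \<ge> 0"
  unfolding psd_iff by blast

lemma psd_herm: "psd A \<Longrightarrow> A $ i $ j = cnj (A $ j $ i)"
  unfolding psd_iff by blast

lemma psdI: "(\<And>i j. A $ i $ j = cnj (A $ j $ i)) \<Longrightarrow> (\<And>v. Im (qf A v) = 0 \<and> Re (qf A v) \<ge> 0) \<Longrightarrow> psd A"
  unfolding psd_iff by blast

lemma trace_mult: "trace (A ** B) = (\<Sum>i\<in>UNIV. \<Sum>j\<in>UNIV. A$i$j * B$j$i)"
  by (simp add: trace_def matrix_matrix_mult_def)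

lemma dd_sum: "(\<Sum>i\<in>UNIV. \<Sum>j\<in>UNIV. cnj (if i = p then x else 0) * (A::complex^'n^'n)$i$j * (if j = q then y else 0)) = cnj x * A$p$q * y"
proof -
  have "cnj (if i = p then x else 0) * A$i$j * (if j = q then y else 0) = (if i = p then (if j = q then cnj x * A$p$q * y else 0) else 0)" for i j
    by auto
  moreover have "(\<Sum>j\<in>UNIV. if i = p then (if j = q then c else 0) else 0) = (if i = p then c else (0::complex))" for i c
    by (cases "i = p") simp_all
  ultimately show ?thesis by simp
qed

lemma qf_two:
  assumes "i \<noteq> k"
  shows "qf A (\<chi> l. if l = i then a else if l = k then b else 0) =
    cnj a * A$i$i * a + cnj a * A$i$k * b + cnj b * A$k$i * a + cnj b * A$k$k * b"
proof -
  have e: "(\<chi> l. if l = i then a else if l = k then b else 0) $ l = (if l = i then a else 0) + (if l = k then b else 0)" for l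
    using assms by auto
  have "qf A (\<chi> l. if l = i then a else if l = k then b else 0) =
    (\<Sum>l\<in>UNIV. \<Sum>j\<in>UNIV. cnj (if l = i then a else 0) * A$l$j * (if j = i then a else 0)) +
    (\<Sum>l\<in>UNIV. \<Sum>j\<in>UNIV. cnj (if l = i then a else 0) * A$l$j * (if j = k then b else 0)) +
    (\<Sum>l\<in>UNIV. \<Sum>j\<in>UNIV. cnj (if l = k then b else 0) * A$l$j * (if j = i then a else 0)) +
    (\<Sum>l\<in>UNIV. \<Sum>j\<in>UNIV. cnj (if l = k then b else 0) * A$l$j * (if j = k then b else 0))"
    unfolding qf_def e by (simp only: complex_cnj_add ring_distribs sum.distrib) (simp add: add_ac)
  then show ?thesis by (simp only: dd_sum)
qed

lemma psd_diag_zero: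
  assumes "psd A" "A$k$k = 0"
  shows "A$i$k = 0"
proof (cases "i = k")
  case True then show ?thesis using assms by simp
next
  case False
  note p = assms(1)[unfolded psd_iff]
  have h: "A$k$i = cnj (A$i$k)" using p by blast
  define z where "z = A$i$k"
  show ?thesis
  proof (rule ccontr)
    assume nz: "A$i$k \<noteq> 0"
    define r where "r = (Re (A$i$i) + 1) / (2 * (cmod z)^2)"
    have zp: "cmod z > 0" using nz z_def by simp
    define a where "a = - of_real r * cnj z"
    have q: "qf A (\<chi> l. if l = i then 1 else if l = k then a else 0) = A$i$i + A$i$k * a + cnj a * A$k$i"
      using qf_two[OF False, of A 1 a] assms(2) by simp
    have c2: "cmod z * cmod z = Re z * Re z + Im z * Im z" by (metis cmod_power2 power2_eq_square)
    have "Re (A$i$k * a + cnj a * A$k$i) = - 2 * r * (cmod z)^2"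
      unfolding a_def h z_def[symmetric]
      by (simp add: a_def c2 algebra_simps power2_eq_square)
    also have "\<dots> = - (Re (A$i$i) + 1)" using zp unfolding r_def by (simp add: field_simps)
    finally have "Re (qf A (\<chi> l. if l = i then 1 else if l = k then a else 0)) = -1"
      unfolding q by simp
    with p show False by (metis neg_0_le_iff_le not_one_le_zero)
  qed
qed

definition sq :: "complex^'n^'n \<Rightarrow> complex^'n \<Rightarrow> complex^'n \<Rightarrow> complex" where
  "sq A u v = (\<Sum>i\<in>UNIV. \<Sum>j\<in>UNIV. cnj (u$i) * A$i$j * v$j)"

lemma qf_sq: "qf A v = sq A v v" by (simp add: qf_def sq_def)

lemma sq_diff_l: "sq A (u - u') v = sq A u v - sq A u' v"
  by (simp add: sq_def ring_distribs sum_subtractf)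
lemma sq_diff_r: "sq A u (v - v') = sq A u v - sq A u v'"
  by (simp add: sq_def ring_distribs sum_subtractf)
lemma sq_scale_l: "sq A (c *s u) v = cnj c * sq A u v"
  by (simp add: sq_def sum_distrib_left mult.assoc)
lemma sq_scale_r: "sq A u (c *s v) = c * sq A u v"
  by (simp add: sq_def sum_distrib_left algebra_simps)
lemma sum_if_const: "(\<Sum>j\<in>UNIV. if P then f j else 0) = (if P then (\<Sum>j\<in>UNIV. f j) else (0::complex))"
  by (cases P) auto

lemma sq_axis_l: "sq A (axis k 1) v = (\<Sum>j\<in>UNIV. A$k$j * v$j)"
proof -
  have "cnj (axis k 1 $ i) * A$i$j * v$j = (if i = k then A$k$j * v$j else 0)" for i j
    by (simp add: axis_def)
  then show ?thesis by (simp add: sq_def sum_if_const)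
qed
lemma sq_axis_r: "sq A u (axis k 1) = (\<Sum>i\<in>UNIV. cnj (u$i) * A$i$k)"
proof -
  have "cnj (u$i) * A$i$j * axis k 1 $ j = (if j = k then cnj (u$i) * A$i$k else 0)" for i j
    by (simp add: axis_def)
  then show ?thesis by (simp add: sq_def)
qed
lemma sq_axis_axis: "sq A (axis k 1) (axis k 1) = A$k$k"
proof -
  have "A $ k $ j * axis k 1 $ j = (if j = k then A$k$k else 0)" for j by (simp add: axis_def)
  then show ?thesis unfolding sq_axis_l by simp
qed

lemma qf_diff: "qf (A - B) v = qf A v - qf B v"
  by (simp add: qf_def ring_distribs sum_subtractf)

lemma qf_outer: "qf (outer w) v = (\<Sum>i\<in>UNIV. cnj (v$i) * w$i) * (\<Sum>j\<in>UNIV. cnj (w$j) * v$j)"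
  unfolding qf_def sum_product by (auto simp: outer_def mult_ac intro!: sum.cong)

lemma psd_diag:
  assumes "psd A" shows "A$k$k = of_real (Re (A$k$k))" "Re (A$k$k) \<ge> 0"
proof -
  note p = assms[unfolded psd_iff]
  have "A$k$k = cnj (A$k$k)" using p by blast
  then show "A$k$k = of_real (Re (A$k$k))" by (metis Reals_cnj_iff complex_is_Real_iff of_real_Re)
  have "qf A (axis k 1) = A$k$k" by (simp add: qf_sq sq_axis_axis)
  then show "Re (A$k$k) \<ge> 0" using p by metis
qed

lemma outer_herm: "outer w $ i $ j = cnj (outer w $ j $ i)"
  by (simp add: outer_def)

lemma schur_step:
  assumes "psd A" "Re (A$k$k) > 0"
  defines "w \<equiv> (\<chi> i. A$i$k / of_real (sqrt (Re (A$k$k))))"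
  shows "psd (A - outer w)" "(A - outer w)$k$k = 0"
    "\<And>i. A$i$i = 0 \<Longrightarrow> (A - outer w)$i$i = 0"
proof -
  define c where "c = Re (A$k$k)"
  have c0: "c > 0" using assms c_def by simp
  have Akk: "A$k$k = of_real c" unfolding c_def by (rule psd_diag(1)[OF assms(1)])
  note p = assms(1)[unfolded psd_iff]
  have herm: "A$i$j = cnj (A$j$i)" for i j using p by blast
  have wi: "w$i = A$i$k / of_real (sqrt c)" for i unfolding w_def c_def by simp
  have sc: "of_real (sqrt c) * of_real (sqrt c) = (of_real c :: complex)"
  proof -
    have "sqrt c * sqrt c = c" using c0 by simp
    then show ?thesis by (metis of_real_mult)
  qed
  have sc': "cnj (of_real (sqrt c)) = (of_real (sqrt c) :: complex)" by simp
  show "(A - outer w)$k$k = 0"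
    using c0 sc by (simp add: outer_def wi Akk field_simps)
  show "A$i$i = 0 \<Longrightarrow> (A - outer w)$i$i = 0" for i
  proof -
    assume "A$i$i = 0"
    then have "A$k$i = 0" using psd_diag_zero[OF assms(1), of i k] by simp
    then have "A$i$k = 0" using herm[of i k] by simp
    then show ?thesis using \<open>A$i$i = 0\<close> by (simp add: outer_def wi)
  qed
  show "psd (A - outer w)"
  proof (rule psdI)
    fix i j show "(A - outer w) $ i $ j = cnj ((A - outer w) $ j $ i)"
      using herm[of i j] outer_herm[of w i j] by simp
  next
    fix v :: "complex^'a"
    define g where "g = (\<Sum>j\<in>UNIV. A$k$j * v$j)"
    have g1: "(\<Sum>i\<in>UNIV. cnj (v$i) * A$i$k) = cnj g"
    proof -
      have "(\<Sum>i\<in>UNIV. cnj (v$i) * A$i$k) = (\<Sum>i\<in>UNIV. cnj (v$i) * cnj (A$k$i))"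
        by (rule sum.cong[OF refl]) (metis herm)
      then show ?thesis unfolding g_def by (simp add: mult.commute)
    qed
    have "(\<Sum>i\<in>UNIV. cnj (v$i) * w$i) = cnj g / of_real (sqrt c)"
      unfolding wi g1[symmetric] by (simp add: sum_divide_distrib)
    moreover have "(\<Sum>j\<in>UNIV. cnj (w$j) * v$j) = g / of_real (sqrt c)"
    proof -
      have "(\<Sum>j\<in>UNIV. cnj (w$j) * v$j) = (\<Sum>j\<in>UNIV. cnj (A$j$k) * v$j) / of_real (sqrt c)"
        unfolding wi by (simp add: sum_divide_distrib)
      also have "(\<Sum>j\<in>UNIV. cnj (A$j$k) * v$j) = g"
        unfolding g_def by (rule sum.cong[OF refl]) (metis herm)
      finally show ?thesis .
    qed
    ultimately have qo: "qf (outer w) v = cnj g * g / of_real c"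
      unfolding qf_outer using sc by (simp add: field_simps)
    define \<beta> where "\<beta> = g / of_real c"
    define u where "u = v - \<beta> *s axis k 1"
    have "qf A u = qf A v - \<beta> * cnj g - cnj \<beta> * g + cnj \<beta> * \<beta> * of_real c"
      unfolding u_def qf_sq sq_diff_l sq_diff_r sq_scale_l sq_scale_r
      unfolding sq_axis_axis
      unfolding sq_axis_l sq_axis_r g1 g_def[symmetric] Akk
      by (simp add: algebra_simps)
    also have "\<dots> = qf A v - cnj g * g / of_real c"
      unfolding \<beta>_def using c0 by (simp add: field_simps)
    finally have "qf (A - outer w) v = qf A u" unfolding qf_diff qo by simp
    then show "Im (qf (A - outer w) v) = 0 \<and> Re (qf (A - outer w) v) \<ge> 0" using psd_qf[OF assms(1), of u] by simp
  qed
qed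

lemma outer_zero: "outer 0 = 0"
  by (simp add: outer_def vec_eq_iff)

lemma chol:
  assumes "finite S"
  shows "psd A \<Longrightarrow> (\<forall>i. i \<notin> S \<longrightarrow> A$i$i = 0) \<Longrightarrow> \<exists>W. A = (\<Sum>k\<in>S. outer (W k))"
  using assms
proof (induction S arbitrary: A rule: finite_induct)
  case empty
  have "A$i$j = 0" for i j
  proof -
    have "A$j$j = 0" using empty by simp
    then have "A$i$j = 0" using psd_diag_zero[OF empty(1)] by blast
    then show ?thesis .
  qed
  then have "A = 0" by (simp add: vec_eq_iff)
  then show ?case by simp
next
  case (insert k S)
  show ?case
  proof (cases "A$k$k = 0")
    case True
    then have "\<forall>i. i \<notin> S \<longrightarrow> A$i$i = 0" using insert(5) by (metis insertE)
    then obtain W where W: "A = (\<Sum>j\<in>S. outer (W j))" using insert by blast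
    have "(\<Sum>j\<in>insert k S. outer ((W(k:=0)) j)) = (\<Sum>j\<in>S. outer (W j))"
      using insert(1,2) by (simp add: outer_zero) (rule sum.cong, auto)
    then show ?thesis using W by metis
  next
    case False
    have "Re (A$k$k) > 0" using psd_diag[OF insert(4), of k] False
      by (metis less_eq_real_def of_real_0)
    note sch = schur_step[OF insert(4) this]
    define w where "w = (\<chi> i. A$i$k / of_real (sqrt (Re (A$k$k))))"
    note sch' = sch[folded w_def]
    have allS: "\<forall>i. i \<notin> S \<longrightarrow> (A - outer w)$i$i = 0"
    proof (intro allI impI)
      fix i assume "i \<notin> S"
      show "(A - outer w)$i$i = 0"
      proof (cases "i = k")
        case True then show ?thesis using sch'(2) by simp
      next
        case False
        then have "A$i$i = 0" using insert(5) \<open>i \<notin> S\<close> by blast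
        then show ?thesis by (rule sch'(3))
      qed
    qed
    obtain W where W: "A - outer w = (\<Sum>j\<in>S. outer (W j))"
      using insert(3)[OF sch'(1) allS] by blast
    have "(\<Sum>j\<in>insert k S. outer ((W(k:=w)) j)) = outer w + (\<Sum>j\<in>S. outer (W j))"
      using insert(1,2) by simp (rule sum.cong, auto)
    also have "\<dots> = A" unfolding W[symmetric] by simp
    finally show ?thesis by (rule exI[of _ "W(k:=w)", OF sym])
  qed
qed

lemma chol_UNIV: "psd (A::complex^'n^'n) \<Longrightarrow> \<exists>W::'n \<Rightarrow> complex^'n. A = (\<Sum>k\<in>UNIV. outer (W k))"
  using chol[of UNIV A] by simp

lemma tr_sum: "trace (E ** (\<Sum>k\<in>K. B k)) = (\<Sum>k\<in>K. trace (E ** B k))"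
proof -
  have "trace (E ** (\<Sum>k\<in>K. B k)) = (\<Sum>i\<in>UNIV. \<Sum>j\<in>UNIV. \<Sum>k\<in>K. E$i$j * B k $j$i)"
    unfolding trace_mult by (simp add: sum_distrib_left)
  also have "\<dots> = (\<Sum>i\<in>UNIV. \<Sum>k\<in>K. \<Sum>j\<in>UNIV. E$i$j * B k $j$i)"
    by (rule sum.cong[OF refl], rule sum.swap)
  also have "\<dots> = (\<Sum>k\<in>K. \<Sum>i\<in>UNIV. \<Sum>j\<in>UNIV. E$i$j * B k $j$i)"
    by (rule sum.swap)
  finally show ?thesis unfolding trace_mult .
qed

lemma tr_sum_l: "trace ((\<Sum>k\<in>K. B k) ** E) = (\<Sum>k\<in>K. trace (B k ** E))"
proof -
  have "trace ((\<Sum>k\<in>K. B k) ** E) = (\<Sum>i\<in>UNIV. \<Sum>j\<in>UNIV. \<Sum>k\<in>K. B k$i$j * E $j$i)"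
    unfolding trace_mult by (simp add: sum_distrib_right)
  also have "\<dots> = (\<Sum>i\<in>UNIV. \<Sum>k\<in>K. \<Sum>j\<in>UNIV. B k$i$j * E $j$i)"
    by (rule sum.cong[OF refl], rule sum.swap)
  also have "\<dots> = (\<Sum>k\<in>K. \<Sum>i\<in>UNIV. \<Sum>j\<in>UNIV. B k$i$j * E $j$i)"
    by (rule sum.swap)
  finally show ?thesis unfolding trace_mult .
qed

lemma tr_outer: "trace (E ** outer w) = qf E w"
  unfolding trace_mult qf_def outer_def by (auto simp: mult_ac intro!: sum.cong)

lemma trace_outer: "trace (outer w) = of_real (\<Sum>i\<in>UNIV. (cmod (w$i))^2)"
proof -
  have "w$i * cnj (w$i) = of_real ((cmod (w$i))^2)" for i by (simp only: complex_norm_square)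
  then show ?thesis by (simp add: trace_def outer_def del: of_real_power)
qed

lemma tr_psd_nonneg:
  fixes \<rho> :: "complex^'n^'n"
  assumes "psd E" "psd \<rho>" shows "Re (trace (E ** \<rho>)) \<ge> 0"
proof -
  obtain W :: "'n \<Rightarrow> complex^'n" where W: "\<rho> = (\<Sum>k\<in>UNIV. outer (W k))" using chol_UNIV[OF assms(2)] by blast
  have "Re (trace (E ** \<rho>)) = (\<Sum>k\<in>UNIV. Re (qf E (W k)))"
    unfolding W tr_sum tr_outer by simp
  also have "\<dots> \<ge> 0" using psd_qf[OF assms(1)] by (simp add: sum_nonneg)
  finally show ?thesis .
qed

lemma tr_bounds:
  assumes "valid_instrument E \<sigma>" "density \<rho>"
  shows "0 \<le> Re (trace (E a x ** \<rho>))" "Re (trace (E a x ** \<rho>)) \<le> 1"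
proof -
  have pE: "psd (E a' x)" for a' using assms(1) unfolding valid_instrument_def by blast
  have pr: "psd \<rho>" "trace \<rho> = 1" using assms(2) unfolding density_def by auto
  show nn: "0 \<le> Re (trace (E a x ** \<rho>))" using tr_psd_nonneg[OF pE pr(1)] .
  have "(\<Sum>a'\<in>UNIV. Re (trace (E a' x ** \<rho>))) = Re (trace ((\<Sum>a'\<in>UNIV. E a' x) ** \<rho>))"
    unfolding tr_sum_l by simp
  also have "\<dots> = 1" using assms(1) pr(2) unfolding valid_instrument_def by simp
  finally have s: "(\<Sum>a'\<in>UNIV. Re (trace (E a' x ** \<rho>))) = 1" .
  have "Re (trace (E a x ** \<rho>)) \<le> (\<Sum>a'\<in>UNIV. Re (trace (E a' x ** \<rho>)))"
    by (rule member_le_sum) (auto intro: tr_psd_nonneg[OF pE pr(1)])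
  then show "Re (trace (E a x ** \<rho>)) \<le> 1" using s by simp
qed

lemma Rval_lin:
  fixes \<alpha> :: "'a::finite \<Rightarrow> 'a \<Rightarrow> 'x::finite \<Rightarrow> 'x \<Rightarrow> real" and K :: "'k set"
  assumes "finite K"
    and "\<And>a x. Re (trace (E a x ** \<rho>)) = (\<Sum>k\<in>K. c k * Re (trace (E a x ** B k)))"
  shows "Rval \<alpha> \<rho> E \<sigma> = (\<Sum>k\<in>K. c k * Rval \<alpha> (B k) E \<sigma>)"
proof -
  have pt: "\<alpha> a b x y * prob \<rho> E \<sigma> a b x y = (\<Sum>k\<in>K. c k * (\<alpha> a b x y * prob (B k) E \<sigma> a b x y))" for a b x y
    unfolding prob_def assms(2) sum_distrib_right sum_distrib_left by (rule sum.cong) (simp_all add: mult_ac)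
  have "Rval \<alpha> \<rho> E \<sigma> = (\<Sum>a\<in>UNIV. \<Sum>b\<in>UNIV. \<Sum>x\<in>UNIV. \<Sum>y\<in>UNIV. \<Sum>k\<in>K. c k * (\<alpha> a b x y * prob (B k) E \<sigma> a b x y))"
    unfolding Rval_def pt ..
  also have "\<dots> = (\<Sum>k\<in>K. \<Sum>a\<in>UNIV. \<Sum>b\<in>UNIV. \<Sum>x\<in>UNIV. \<Sum>y\<in>UNIV. c k * (\<alpha> a b x y * prob (B k) E \<sigma> a b x y))"
  proof -
    let ?f = "\<lambda>a b x y k. c k * (\<alpha> a b x y * prob (B k) E \<sigma> a b x y)"
    have s1: "(\<Sum>y\<in>UNIV. \<Sum>k\<in>K. ?f a b x y k) = (\<Sum>k\<in>K. \<Sum>y\<in>UNIV. ?f a b x y k)" for a b x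
      by (rule sum.swap)
    have s2: "(\<Sum>x\<in>UNIV. \<Sum>k\<in>K. \<Sum>y\<in>UNIV. ?f a b x y k) = (\<Sum>k\<in>K. \<Sum>x\<in>UNIV. \<Sum>y\<in>UNIV. ?f a b x y k)" for a b
      by (rule sum.swap)
    have s3: "(\<Sum>b\<in>UNIV. \<Sum>k\<in>K. \<Sum>x\<in>UNIV. \<Sum>y\<in>UNIV. ?f a b x y k) = (\<Sum>k\<in>K. \<Sum>b\<in>UNIV. \<Sum>x\<in>UNIV. \<Sum>y\<in>UNIV. ?f a b x y k)" for a
      by (rule sum.swap)
    have "(\<Sum>a\<in>UNIV. \<Sum>b\<in>UNIV. \<Sum>x\<in>UNIV. \<Sum>y\<in>UNIV. \<Sum>k\<in>K. ?f a b x y k) = (\<Sum>a\<in>UNIV. \<Sum>b\<in>UNIV. \<Sum>x\<in>UNIV. \<Sum>k\<in>K. \<Sum>y\<in>UNIV. ?f a b x y k)"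
      by (simp only: s1)
    also have "\<dots> = (\<Sum>a\<in>UNIV. \<Sum>b\<in>UNIV. \<Sum>k\<in>K. \<Sum>x\<in>UNIV. \<Sum>y\<in>UNIV. ?f a b x y k)"
      by (simp only: s2)
    also have "\<dots> = (\<Sum>a\<in>UNIV. \<Sum>k\<in>K. \<Sum>b\<in>UNIV. \<Sum>x\<in>UNIV. \<Sum>y\<in>UNIV. ?f a b x y k)"
      by (simp only: s3)
    also have "\<dots> = (\<Sum>k\<in>K. \<Sum>a\<in>UNIV. \<Sum>b\<in>UNIV. \<Sum>x\<in>UNIV. \<Sum>y\<in>UNIV. ?f a b x y k)"
      by (rule sum.swap)
    finally show ?thesis .
  qed
  also have "\<dots> = (\<Sum>k\<in>K. c k * Rval \<alpha> (B k) E \<sigma>)"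
    unfolding Rval_def by (simp only: sum_distrib_left)
  finally show ?thesis .
qed

lemma Rval_bound:
  assumes "valid_instrument E \<sigma>" "density \<rho>"
  shows "Rval \<alpha> \<rho> E \<sigma> \<le> (\<Sum>a\<in>UNIV. \<Sum>b\<in>UNIV. \<Sum>x\<in>UNIV. \<Sum>y\<in>UNIV. \<bar>\<alpha> a b x y\<bar>)"
  unfolding Rval_def
proof (intro sum_mono)
  fix a b x y
  have d: "density (\<sigma> a x)" using assms(1) unfolding valid_instrument_def by blast
  have "\<bar>prob \<rho> E \<sigma> a b x y\<bar> \<le> 1"
    unfolding prob_def abs_mult
    using tr_bounds[OF assms(1,2), of a x] tr_bounds[OF assms(1) d, of b y]
    by (simp add: mult_le_one)
  then have "\<bar>\<alpha> a b x y * prob \<rho> E \<sigma> a b x y\<bar> \<le> \<bar>\<alpha> a b x y\<bar>"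
    unfolding abs_mult by (simp add: mult_left_le)
  then show "\<alpha> a b x y * prob \<rho> E \<sigma> a b x y \<le> \<bar>\<alpha> a b x y\<bar>" by linarith
qed



definition seg :: "complex^'n^'n \<Rightarrow> complex^'n^'n \<Rightarrow> real \<Rightarrow> complex^'n^'n" where
  "seg A B t = (\<chi> i j. of_real (1 - t) * A$i$j + of_real t * B$i$j)"

lemma qf_seg: "qf (seg A B t) v = of_real (1 - t) * qf A v + of_real t * qf B v"
  by (simp add: qf_def seg_def ring_distribs sum.distrib sum_distrib_left mult_ac)

lemma tr_seg: "trace (E ** seg A B t) = of_real (1 - t) * trace (E ** A) + of_real t * trace (E ** B)"
  by (simp add: trace_mult seg_def ring_distribs sum.distrib sum_distrib_left mult_ac)

lemma density_seg:
  assumes "density A" "density B" "0 \<le> t" "t \<le> 1"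
  shows "density (seg A B t)"
proof -
  have pA: "psd A" "trace A = 1" and pB: "psd B" "trace B = 1" using assms unfolding density_def by auto
  have "psd (seg A B t)"
  proof (rule psdI)
    fix i j show "seg A B t $ i $ j = cnj (seg A B t $ j $ i)"
      using psd_herm[OF pA(1), of i j] psd_herm[OF pB(1), of i j] unfolding seg_def by simp
  next
    fix v
    have "Im (qf A v) = 0" "Re (qf A v) \<ge> 0" "Im (qf B v) = 0" "Re (qf B v) \<ge> 0"
      using psd_qf[OF pA(1), of v] psd_qf[OF pB(1), of v] by auto
    then show "Im (qf (seg A B t) v) = 0 \<and> 0 \<le> Re (qf (seg A B t) v)"
      unfolding qf_seg using assms(3,4) by simp
  qed
  moreover have "trace (seg A B t) = 1"
    using pA(2) pB(2) by (simp add: trace_def seg_def sum.distrib flip: sum_distrib_left)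
  ultimately show ?thesis unfolding density_def by simp
qed

lemma purity_cont: "continuous_on {0..1} (\<lambda>t. purity (seg A B t))"
  unfolding purity_def trace_mult seg_def
  by (simp, intro continuous_intros)

lemma seg_ivt:
  assumes "density A" "density B" "purity A \<le> P" "P \<le> purity B"
  shows "\<exists>t. 0 \<le> t \<and> t \<le> 1 \<and> density (seg A B t) \<and> purity (seg A B t) = P"
proof -
  have "seg A B 0 = A" "seg A B 1 = B" by (simp_all add: seg_def vec_eq_iff)
  then obtain t where "0 \<le> t" "t \<le> 1" "purity (seg A B t) = P"
    using IVT'[of "\<lambda>t. purity (seg A B t)" 0 P 1, OF _ _ _ purity_cont] assms by auto
  then show ?thesis using density_seg[OF assms(1,2)] by blast
qed

lemma nsq: "z * cnj z = (of_real (cmod z))^2"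
  by (metis complex_norm_square of_real_power)

lemma Rval_seg: "Rval \<alpha> (seg A B t) E \<sigma> = (1 - t) * Rval \<alpha> A E \<sigma> + t * Rval \<alpha> B E \<sigma>"
proof -
  have "Rval \<alpha> (seg A B t) E \<sigma> = (\<Sum>k\<in>UNIV. (if k then t else 1 - t) * Rval \<alpha> (if k then B else A) E \<sigma>)"
    by (rule Rval_lin) (simp_all add: tr_seg UNIV_bool)
  then show ?thesis by (simp add: UNIV_bool)
qed

lemma pure_state:
  assumes "(\<Sum>i\<in>UNIV. (cmod (u$i))^2) = 1"
  shows "density (outer u)" "purity (outer u) = 1"
proof -
  have "psd (outer u)"
  proof (rule psdI)
    fix i j show "outer u $ i $ j = cnj (outer u $ j $ i)" by (rule outer_herm)
  next
    fix v
    define z where "z = (\<Sum>j\<in>UNIV. cnj (u$j) * v$j)"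
    have "(\<Sum>i\<in>UNIV. cnj (v$i) * u$i) = cnj z" unfolding z_def by (simp add: mult.commute)
    then have "qf (outer u) v = cnj z * z" unfolding qf_outer z_def[symmetric] by simp
    also have "\<dots> = of_real ((cmod z)^2)" by (metis complex_norm_square mult.commute)
    finally have "qf (outer u) v = of_real ((cmod z)^2)" .
    then show "Im (qf (outer u) v) = 0 \<and> 0 \<le> Re (qf (outer u) v)" by simp
  qed
  then show "density (outer u)" unfolding density_def trace_outer assms by simp
  have "trace (outer u ** outer u) = trace (outer u) * trace (outer u)"
    unfolding trace_mult unfolding trace_def outer_def sum_product by (auto simp: mult_ac intro!: sum.cong)
  then show "purity (outer u) = 1" unfolding purity_def trace_outer assms by simp
qed

lemma qf_scale: "qf A (c *s u) = cnj c * c * qf A u"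
  unfolding qf_sq sq_scale_l sq_scale_r by simp

lemma improve:
  fixes \<rho> :: "complex^'n^'n"
  assumes "density \<rho>" "valid_instrument E \<sigma>"
  shows "\<exists>u. (\<Sum>i\<in>UNIV. (cmod (u$i))^2) = 1 \<and> Rval \<alpha> \<rho> E \<sigma> \<le> Rval \<alpha> (outer u) E \<sigma>"
proof -
  have pr: "psd \<rho>" "trace \<rho> = 1" using assms(1) unfolding density_def by auto
  obtain W :: "'n \<Rightarrow> complex^'n" where W: "\<rho> = (\<Sum>k\<in>UNIV. outer (W k))" using chol_UNIV[OF pr(1)] by blast
  define p where "p k = (\<Sum>i\<in>UNIV. (cmod (W k $ i))^2)" for k
  define u where "u k = of_real (1 / sqrt (p k)) *s W k" for k
  have p0: "p k \<ge> 0" for k unfolding p_def by (simp add: sum_nonneg)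
  have Wk: "W k = of_real (sqrt (p k)) *s u k" for k
  proof (cases "p k = 0")
    case True
    then have "\<forall>i\<in>UNIV. (cmod (W k $ i))^2 = 0" unfolding p_def
      by (subst sum_nonneg_eq_0_iff[symmetric]) auto
    then have "W k = 0" by (simp add: vec_eq_iff)
    then show ?thesis by (simp add: u_def)
  next
    case False
    then have "sqrt (p k) > 0" using p0[of k] by simp
    then show ?thesis by (simp add: u_def vec_eq_iff field_simps flip: of_real_mult)
  qed
  have qW: "qf A (W k) = of_real (p k) * qf A (u k)" for A k
    unfolding Wk[of k] qf_scale using p0[of k] by (simp flip: of_real_mult)
  have RV: "Rval \<alpha> \<rho> E \<sigma> = (\<Sum>k\<in>UNIV. p k * Rval \<alpha> (outer (u k)) E \<sigma>)"
    by (rule Rval_lin) (simp_all add: W tr_sum tr_outer qW)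
  have "trace (\<Sum>k\<in>UNIV. outer (W k)) = (\<Sum>k\<in>UNIV. trace (outer (W k)))"
    unfolding trace_def sum_component by (rule sum.swap)
  then have sp: "(\<Sum>k\<in>UNIV. p k) = 1"
    using pr(2) unfolding W trace_outer p_def[symmetric] by (metis of_real_eq_1_iff of_real_sum)
  define r where "r k = Rval \<alpha> (outer (u k)) E \<sigma>" for k
  define K where "K = {k. p k > 0}"
  have fK: "finite K" by simp
  have Kne: "K \<noteq> {}"
  proof
    assume "K = {}"
    then have "\<not> p k > 0" for k unfolding K_def by blast
    then have "p k = 0" for k using p0[of k] by (meson antisym not_less)
    then show False using sp by simp
  qed
  obtain k0 where k0: "k0 \<in> K" "r k0 = Max (r ` K)"
  proof -
    have "Max (r ` K) \<in> r ` K" using Max_in[of "r ` K"] fK Kne by simp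
    then show ?thesis using that by (metis imageE)
  qed
  have rle: "r k \<le> r k0" if "k \<in> K" for k using k0(2) Max_ge[of "r ` K"] fK that by simp
  have "Rval \<alpha> \<rho> E \<sigma> = (\<Sum>k\<in>K. p k * r k)"
    unfolding RV r_def[symmetric]
    by (rule sum.mono_neutral_right) (auto simp: K_def, metis less_eq_real_def p0)
  also have "\<dots> \<le> (\<Sum>k\<in>K. p k * r k0)"
    by (rule sum_mono) (simp add: rle mult_left_mono p0)
  also have "\<dots> = r k0 * (\<Sum>k\<in>K. p k)" by (simp add: sum_distrib_left mult.commute)
  also have "(\<Sum>k\<in>K. p k) = 1"
    unfolding sp[symmetric]
    by (rule sum.mono_neutral_left) (auto simp: K_def, metis less_eq_real_def p0)
  finally have le: "Rval \<alpha> \<rho> E \<sigma> \<le> r k0" by simp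
  have pk0: "p k0 > 0" using k0(1) K_def by simp
  have "(\<Sum>i\<in>UNIV. (cmod (u k0 $ i))^2) = (\<Sum>i\<in>UNIV. (cmod (W k0 $ i))^2 / p k0)"
  proof -
    have "(cmod (W k0 $ i / of_real (sqrt (p k0))))^2 = (cmod (W k0 $ i))^2 / p k0" for i
      using pk0 by (simp add: norm_divide power_divide)
    then show ?thesis unfolding u_def by simp
  qed
  also have "\<dots> = 1" unfolding sum_divide_distrib[symmetric] p_def[symmetric] using pk0 by simp
  finally show ?thesis using le unfolding r_def by blast
qed

lemma qf_mat: "qf (mat c) v = c * of_real (\<Sum>i\<in>UNIV. (cmod (v$i))^2)"
proof -
  have "cnj (v$i) * mat c $ i $ j * v$j = (if j = i then c * of_real ((cmod (v$i))^2) else 0)" for i j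
    by (simp add: mat_def nsq mult_ac)
  then show ?thesis by (simp add: qf_def sum_distrib_left)
qed

lemma psd_mat: "c \<ge> 0 \<Longrightarrow> psd (mat (of_real c))"
  unfolding psd_iff qf_mat by (auto simp: mat_def sum_nonneg)

lemma psd_zero: "psd 0"
  unfolding psd_iff by (simp add: qf_def)

lemma maxmix:
  defines "M \<equiv> mat (of_real (1 / real CARD('n))) :: complex^'n^'n"
  shows "density M" "purity M = 1 / real CARD('n)"
proof -
  have "psd M" unfolding M_def by (rule psd_mat) simp
  moreover have "trace M = 1" unfolding M_def by (simp add: trace_def mat_def)
  ultimately show "density M" unfolding density_def by simp
  have "M $ i $ j * M $ j $ i = (if j = i then of_real (1 / real CARD('n) ^ 2) else 0)" for i j
    by (simp add: M_def mat_def power2_eq_square)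
  then show "purity M = 1 / real CARD('n)"
    unfolding purity_def trace_mult by (simp add: power2_eq_square)
qed

lemma axis_unit: "(\<Sum>i\<in>UNIV. (cmod ((axis k 1 :: complex^'n) $ i))^2) = 1"
proof -
  have "(cmod ((axis k 1 :: complex^'n) $ i))^2 = (if i = k then 1 else 0)" for i
    by (simp add: axis_def)
  then show ?thesis by simp
qed

theorem mainTheorem5:
  fixes \<alpha> :: "'a::finite \<Rightarrow> 'a \<Rightarrow> 'x::finite \<Rightarrow> 'x \<Rightarrow> real"
  assumes "CARD('n::finite) \<ge> 2"
    and "1 / real CARD('n) \<le> P" and "P \<le> Q" and "Q \<le> 1"
  shows "Rmax \<alpha> TYPE('n) P \<le> Rmax \<alpha> TYPE('n) Q"
  unfolding Rmax_def
proof (rule cSup_mono)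
  define e :: "complex^'n^'n" where "e = outer (axis undefined 1)"
  have de: "density e" "purity e = 1" unfolding e_def using pure_state[OF axis_unit] by auto
  define E0 :: "'a \<Rightarrow> 'x \<Rightarrow> complex^'n^'n" where "E0 a x = (if a = undefined then mat 1 else 0)" for a x
  define s0 :: "'a \<Rightarrow> 'x \<Rightarrow> complex^'n^'n" where "s0 a x = e" for a x
  have vi: "valid_instrument E0 s0"
    unfolding valid_instrument_def
  proof (intro conjI allI)
    fix a x show "psd (E0 a x)" unfolding E0_def using psd_mat[of 1] psd_zero by (cases "a = undefined") simp_all
  next
    fix x show "(\<Sum>a\<in>UNIV. E0 a x) = mat 1" unfolding E0_def by simp
  next
    fix a x show "density (s0 a x)" unfolding s0_def using de by simp
  qed
  obtain t where t: "density (seg (mat (of_real (1 / real CARD('n)))) e t)"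
      "purity (seg (mat (of_real (1 / real CARD('n)))) e t) = P"
    using seg_ivt[OF maxmix(1)[where 'n='n] de(1), of P] maxmix(2)[where 'n='n] de(2) assms by auto
  then show "{Rval \<alpha> \<rho> E \<sigma> |(\<rho>::complex^'n^'n) E \<sigma>. density \<rho> \<and> purity \<rho> = P \<and> valid_instrument E \<sigma>} \<noteq> {}"
    using vi by blast
next
  show "bdd_above {Rval \<alpha> \<rho> E \<sigma> |(\<rho>::complex^'n^'n) E \<sigma>. density \<rho> \<and> purity \<rho> = Q \<and> valid_instrument E \<sigma>}"
    by (rule bdd_aboveI[where M="\<Sum>a\<in>UNIV. \<Sum>b\<in>UNIV. \<Sum>x\<in>UNIV. \<Sum>y\<in>UNIV. \<bar>\<alpha> a b x y\<bar>"])
      (auto intro: Rval_bound)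
next
  fix v assume "v \<in> {Rval \<alpha> \<rho> E \<sigma> |(\<rho>::complex^'n^'n) E \<sigma>. density \<rho> \<and> purity \<rho> = P \<and> valid_instrument E \<sigma>}"
  then obtain \<rho> :: "complex^'n^'n" and E \<sigma> where v: "v = Rval \<alpha> \<rho> E \<sigma>" "density \<rho>" "purity \<rho> = P" "valid_instrument E \<sigma>"
    by blast
  obtain u where u: "(\<Sum>i\<in>UNIV. (cmod (u$i))^2) = 1" "Rval \<alpha> \<rho> E \<sigma> \<le> Rval \<alpha> (outer u) E \<sigma>"
    using improve[OF v(2,4)] by blast
  note pu = pure_state[OF u(1)]
  obtain t where t: "0 \<le> t" "t \<le> 1" "density (seg \<rho> (outer u) t)" "purity (seg \<rho> (outer u) t) = Q"
    using seg_ivt[OF v(2) pu(1), of Q] v(3) pu(2) assms by auto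
  have "v \<le> Rval \<alpha> (seg \<rho> (outer u) t) E \<sigma>"
  proof -
    have h: "t * Rval \<alpha> \<rho> E \<sigma> \<le> t * Rval \<alpha> (outer u) E \<sigma>" using u(2) t(1) by (rule mult_left_mono)
    have "(1 - t) * Rval \<alpha> \<rho> E \<sigma> + t * Rval \<alpha> (outer u) E \<sigma> = Rval \<alpha> \<rho> E \<sigma> + (t * Rval \<alpha> (outer u) E \<sigma> - t * Rval \<alpha> \<rho> E \<sigma>)"
      by (simp add: algebra_simps)
    then show ?thesis unfolding Rval_seg v(1) using h by linarith
  qed
  then show "\<exists>a\<in>{Rval \<alpha> \<rho> E \<sigma> |(\<rho>::complex^'n^'n) E \<sigma>. density \<rho> \<and> purity \<rho> = Q \<and> valid_instrument E \<sigma>}. v \<le> a"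
    using t(3,4) v(4) by blast
qed

end
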